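(* Let $\mathbb{F}_Q$ be a prime field, $\mathbb{F}_Q^*=\mathbb{F}_Q\setminus\{0\}$, $\sigma,\beta\in\mathbb{N}$, and $H:\{0,1\}^\sigma\to\mathbb{F}_Q$ a function with no collisions on the inputs considered. An optimized OLE tuple is generated by drawing $s_A$ and $s_{B,1},\dots,s_{B,\beta}$ uniformly from $\mathbb{F}_Q$ and $r_{B,1},\dots,r_{B,\beta}$ uniformly from $\mathbb{F}_Q^*$, all independently, and setting $r_{A,j}=(s_A+s_{B,j})/r_{B,j}$ for $j=1,\dots,\beta$ (so $r_{A,j}r_{B,j}=s_A+s_{B,j}$); Alice receives $(s_A,r_{A,1},\dots,r_{A,\beta})$ and Bob receives $((s_{B,1},r_{B,1}),\dots,(s_{B,\beta},r_{B,\beta}))$. Alice holds one element $x\in\{0,1\}^\sigma$ and Bob holds elements $y_1,\dots,y_\beta\in\{0,1\}^\sigma$. In the set comparison protocol, Alice sends $c=s_A-H(x)$ to Bob; Bob sends $d_j=(c+H(y_j)+s_{B,j})/r_{B,j}$ for each $j$ to Alice; Alice learns for each $j$ whether $x=y_j$ by checking $d_j\stackrel{?}{=}r_{A,j}$. Then this set comparison protocol is secure in the semi-honest model: there exist simulators of Bob's view (from $y_1,\dots,y_\beta$ and his OLE share) and of Alice's view (from $x$, her OLE share and her output, namely which $j$ satisfy $x=y_j$) that are identically distributed to the respective real views.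
   Context: Semi-honest security: a party's view consists of its input, its correlated randomness and all messages it receives; a protocol is secure if each party's view can be simulated from that party's input and output alone. All arithmetic is in $\mathbb{F}_Q$. *)

theory Defs
  imports "HOL-Probability.Probability_Mass_Function" "Berlekamp_Zassenhaus.Finite_Field"
begin

text \<open>The prime field F_Q is the type 'q mod_ring with 'q :: prime_card (CARD('q) = Q prime).
  Bit strings in {0,1}^sigma are bool lists of length sigma.\<close>

fun iid_list :: "nat \<Rightarrow> 'a pmf \<Rightarrow> 'a list pmf" where
  "iid_list 0 p = return_pmf []"
| "iid_list (Suc n) p = do { x \<leftarrow> p; xs \<leftarrow> iid_list n p; return_pmf (x # xs) }"

definition unif_F :: "'q::prime_card mod_ring pmf" where
  "unif_F = pmf_of_set UNIV"

definition unif_Fstar :: "'q::prime_card mod_ring pmf" where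
  "unif_Fstar = pmf_of_set (UNIV - {0})"

definition ole_gen :: "nat \<Rightarrow> ('q::prime_card mod_ring \<times> ('q mod_ring \<times> 'q mod_ring) list) pmf" where
  "ole_gen \<beta> = do {
     sA \<leftarrow> unif_F;
     sBs \<leftarrow> iid_list \<beta> unif_F;
     rBs \<leftarrow> iid_list \<beta> unif_Fstar;
     return_pmf (sA, zip sBs rBs) }"

definition alice_share ::
  "'q::prime_card mod_ring \<times> ('q mod_ring \<times> 'q mod_ring) list \<Rightarrow> 'q mod_ring \<times> 'q mod_ring list" where
  "alice_share ole = (case ole of (sA, bs) \<Rightarrow> (sA, map (\<lambda>(sB, rB). (sA + sB) / rB) bs))"

definition bob_share ::
  "'q::prime_card mod_ring \<times> ('q mod_ring \<times> 'q mod_ring) list \<Rightarrow> ('q mod_ring \<times> 'q mod_ring) list" where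
  "bob_share ole = snd ole"

definition msg_c :: "(bool list \<Rightarrow> 'q::prime_card mod_ring) \<Rightarrow> bool list \<Rightarrow> 'q mod_ring \<Rightarrow> 'q mod_ring" where
  "msg_c H x sA = sA - H x"

definition msgs_d :: "(bool list \<Rightarrow> 'q::prime_card mod_ring) \<Rightarrow> bool list list \<Rightarrow>
    ('q mod_ring \<times> 'q mod_ring) list \<Rightarrow> 'q mod_ring \<Rightarrow> 'q mod_ring list" where
  "msgs_d H ys bs c = map (\<lambda>(y, (sB, rB)). (c + H y + sB) / rB) (zip ys bs)"

definition alice_output :: "bool list \<Rightarrow> bool list list \<Rightarrow> bool list" where
  "alice_output x ys = map (\<lambda>y. x = y) ys"

definition bob_view :: "(bool list \<Rightarrow> 'q::prime_card mod_ring) \<Rightarrow> nat \<Rightarrow> bool list \<Rightarrow> bool list list \<Rightarrow>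
    (bool list list \<times> ('q mod_ring \<times> 'q mod_ring) list \<times> 'q mod_ring) pmf" where
  "bob_view H \<beta> x ys = map_pmf (\<lambda>ole. (ys, bob_share ole, msg_c H x (fst ole))) (ole_gen \<beta>)"

definition alice_view :: "(bool list \<Rightarrow> 'q::prime_card mod_ring) \<Rightarrow> nat \<Rightarrow> bool list \<Rightarrow> bool list list \<Rightarrow>
    (bool list \<times> ('q mod_ring \<times> 'q mod_ring list) \<times> 'q mod_ring list) pmf" where
  "alice_view H \<beta> x ys = map_pmf (\<lambda>ole. (x, alice_share ole,
       msgs_d H ys (bob_share ole) (msg_c H x (fst ole)))) (ole_gen \<beta>)"

end

theory Submission
  imports Defs
begin

lemma unif_F_bij:
  fixes f :: "'q::prime_card mod_ring \<Rightarrow> 'q mod_ring"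
  assumes "bij f" shows "map_pmf f unif_F = unif_F"
  unfolding unif_F_def using assms by (intro map_pmf_of_set_bij_betw) auto

lemma unif_F_shift: "map_pmf (\<lambda>a. a + c) (unif_F :: 'q::prime_card mod_ring pmf) = unif_F"
proof (rule unif_F_bij)
  show "bij (\<lambda>a::'q mod_ring. a + c)"
    by (rule bij_betw_byWitness[where f'="\<lambda>a. a - c"]) auto
qed

lemma unif_F_aff:
  fixes r :: "'q::prime_card mod_ring"
  assumes "r \<noteq> 0"
  shows "map_pmf (\<lambda>a. (s + a) / r) unif_F = unif_F"
proof (rule unif_F_bij)
  show "bij (\<lambda>a::'q mod_ring. (s + a) / r)"
    by (rule bij_betw_byWitness[where f'="\<lambda>b. b * r - s"]) (use assms in auto)
qed

lemma unif_Fstar_inv: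
  fixes c :: "'q::prime_card mod_ring"
  assumes "c \<noteq> 0"
  shows "map_pmf (\<lambda>r. c / r) unif_Fstar = unif_Fstar"
  unfolding unif_Fstar_def
proof (rule map_pmf_of_set_bij_betw)
  show "bij_betw (\<lambda>r. c / r) (UNIV - {0}) (UNIV - {0::'q mod_ring})"
    by (rule bij_betw_byWitness[where f'="\<lambda>r. c / r"]) (use assms in auto)
  have "(1::'q mod_ring) \<in> UNIV - {0}" by simp
  then show "UNIV - {0::'q mod_ring} \<noteq> {}" by blast
qed auto

lemma unif_Fstar_nz: "r \<in> set_pmf (unif_Fstar :: 'q::prime_card mod_ring pmf) \<Longrightarrow> r \<noteq> 0"
proof -
  have "(1::'q mod_ring) \<in> UNIV - {0}" by simp
  then have "UNIV - {0::'q mod_ring} \<noteq> {}" by blast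
  then show "r \<in> set_pmf (unif_Fstar :: 'q::prime_card mod_ring pmf) \<Longrightarrow> r \<noteq> 0"
    unfolding unif_Fstar_def by (subst (asm) set_pmf_of_set) auto
qed


lemma bind_unif_F_aff:
  fixes r :: "'q::prime_card mod_ring"
  assumes "r \<noteq> 0"
  shows "bind_pmf unif_F (\<lambda>a. h ((s + a) / r)) = bind_pmf unif_F h"
proof -
  have "bind_pmf unif_F (\<lambda>a. h ((s + a) / r)) = bind_pmf (map_pmf (\<lambda>a. (s + a) / r) unif_F) h"
    by (simp add: bind_map_pmf)
  also have "\<dots> = bind_pmf unif_F h" using unif_F_aff[OF assms] by simp
  finally show ?thesis .
qed

lemma bind_unif_Fstar_inv:
  fixes c :: "'q::prime_card mod_ring"
  assumes "c \<noteq> 0"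
  shows "bind_pmf unif_Fstar (\<lambda>a. h (c / a)) = bind_pmf unif_Fstar h"
proof -
  have "bind_pmf unif_Fstar (\<lambda>a. h (c / a)) = bind_pmf (map_pmf (\<lambda>a. c / a) unif_Fstar) h"
    by (simp add: bind_map_pmf)
  also have "\<dots> = bind_pmf unif_Fstar h" using unif_Fstar_inv[OF assms] by simp
  finally show ?thesis .
qed

definition K :: "'q::prime_card mod_ring \<Rightarrow> bool \<Rightarrow> 'q mod_ring pmf" where
  "K r b = (if b then return_pmf r else map_pmf (\<lambda>e. r + e) unif_Fstar)"

lemma single_neq:
  fixes sA d :: "'q::prime_card mod_ring"
  assumes "d \<noteq> 0"
  shows "map_pmf (\<lambda>(sB, rB). ((sA + sB) / rB, (sA + sB + d) / rB)) (pair_pmf unif_F unif_Fstar)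
    = bind_pmf (pair_pmf unif_F unif_Fstar) (\<lambda>(sB, rB). map_pmf (\<lambda>m. ((sA + sB) / rB, m))
         (K ((sA + sB) / rB) False))"
proof -
  define T where "T = bind_pmf unif_F (\<lambda>r. map_pmf (\<lambda>e. (r, r + e)) (unif_Fstar :: 'q mod_ring pmf))"
  have "map_pmf (\<lambda>(sB, rB). ((sA + sB) / rB, (sA + sB + d) / rB)) (pair_pmf unif_F unif_Fstar)
      = bind_pmf unif_F (\<lambda>sB. bind_pmf unif_Fstar (\<lambda>rB. return_pmf ((sA + sB) / rB, (sA + sB) / rB + d / rB)))"
    by (simp add: pair_pmf_def map_bind_pmf add_divide_distrib)
  also have "\<dots> = bind_pmf unif_Fstar (\<lambda>rB. bind_pmf unif_F (\<lambda>sB. (\<lambda>r. return_pmf (r, r + d / rB)) ((sA + sB) / rB)))"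
    by (subst bind_commute_pmf) (rule refl)
  also have "\<dots> = bind_pmf unif_Fstar (\<lambda>rB. bind_pmf unif_F (\<lambda>r. return_pmf (r, r + d / rB)))"
    by (intro bind_pmf_cong refl bind_unif_F_aff unif_Fstar_nz)
  also have "\<dots> = bind_pmf unif_F (\<lambda>r. bind_pmf unif_Fstar (\<lambda>rB. (\<lambda>e. return_pmf (r, r + e)) (d / rB)))"
    by (subst bind_commute_pmf) (rule refl)
  also have "\<dots> = bind_pmf unif_F (\<lambda>r. bind_pmf unif_Fstar (\<lambda>e. return_pmf (r, r + e)))"
    by (intro bind_pmf_cong refl bind_unif_Fstar_inv assms)
  also have "\<dots> = T" by (simp add: T_def map_pmf_def)
  finally have L: "map_pmf (\<lambda>(sB, rB). ((sA + sB) / rB, (sA + sB + d) / rB)) (pair_pmf unif_F unif_Fstar) = T" .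
  have "bind_pmf (pair_pmf unif_F unif_Fstar) (\<lambda>(sB, rB). map_pmf (\<lambda>m. ((sA + sB) / rB, m))
         (K ((sA + sB) / rB) False))
      = bind_pmf unif_F (\<lambda>sB. bind_pmf unif_Fstar (\<lambda>rB. (\<lambda>r. map_pmf (\<lambda>e. (r, r + e)) unif_Fstar) ((sA + sB) / rB)))"
    by (simp add: pair_pmf_def bind_assoc_pmf bind_return_pmf K_def pmf.map_comp o_def)
  also have "\<dots> = bind_pmf unif_Fstar (\<lambda>rB. bind_pmf unif_F (\<lambda>sB. (\<lambda>r. map_pmf (\<lambda>e. (r, r + e)) unif_Fstar) ((sA + sB) / rB)))"
    by (subst bind_commute_pmf) (rule refl)
  also have "\<dots> = bind_pmf unif_Fstar (\<lambda>rB::'q mod_ring. T)"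
    unfolding T_def
  proof (rule bind_pmf_cong[OF refl])
    fix rB :: "'q mod_ring" assume "rB \<in> set_pmf unif_Fstar"
    then have "rB \<noteq> 0" by (rule unif_Fstar_nz)
    from bind_unif_F_aff[OF this, of "\<lambda>r. map_pmf (\<lambda>e. (r, r + e)) unif_Fstar" sA]
    show "bind_pmf unif_F (\<lambda>sB. (\<lambda>r. map_pmf (\<lambda>e. (r, r + e)) unif_Fstar) ((sA + sB) / rB)) =
       bind_pmf unif_F (\<lambda>r. map_pmf (\<lambda>e. (r, r + e)) unif_Fstar)" by simp
  qed
  also have "\<dots> = T" by simp
  finally show ?thesis using L by simp
qed


lemma single:
  fixes sA :: "'q::prime_card mod_ring" and H :: "bool list \<Rightarrow> 'q mod_ring"
  assumes "H y = H x \<longleftrightarrow> x = y"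
  shows "map_pmf (\<lambda>b. ((case b of (sB, rB) \<Rightarrow> (sA + sB) / rB),
                        (case b of (sB, rB) \<Rightarrow> (sA - H x + H y + sB) / rB))) (pair_pmf unif_F unif_Fstar)
    = bind_pmf (pair_pmf unif_F unif_Fstar) (\<lambda>b. map_pmf (\<lambda>m. ((case b of (sB, rB) \<Rightarrow> (sA + sB) / rB), m))
         (K (case b of (sB, rB) \<Rightarrow> (sA + sB) / rB) (x = y)))"
proof (cases "x = y")
  case True
  then show ?thesis by (simp add: K_def map_pmf_def bind_return_pmf split_beta)
next
  case False
  define d where "d = H y - H x"
  have "d \<noteq> 0" using False assms by (simp add: d_def)
  have eq: "\<And>sB. sA - H x + H y + sB = sA + sB + d" by (simp add: d_def algebra_simps)
  show ?thesis using single_neq[OF \<open>d \<noteq> 0\<close>, of sA] False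
    by (simp add: eq case_prod_unfold)
qed

fun seqp :: "'a pmf list \<Rightarrow> 'a list pmf" where
  "seqp [] = return_pmf []"
| "seqp (p # ps) = bind_pmf p (\<lambda>a. bind_pmf (seqp ps) (\<lambda>as. return_pmf (a # as)))"

definition SA :: "bool list \<Rightarrow> 'q::prime_card mod_ring \<times> 'q mod_ring list \<Rightarrow> bool list \<Rightarrow> 'q mod_ring list pmf" where
  "SA x sh out = seqp (map (\<lambda>(r, b). K r b) (zip (snd sh) out))"

lemma alice_core:
  fixes sA :: "'q::prime_card mod_ring" and H :: "bool list \<Rightarrow> 'q mod_ring"
  shows "length ys = n \<Longrightarrow> (\<forall>y\<in>set ys. H y = H x \<longleftrightarrow> x = y) \<Longrightarrow>
    map_pmf (\<lambda>bs. (map (\<lambda>(sB, rB). (sA + sB) / rB) bs, msgs_d H ys bs (sA - H x)))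
      (iid_list n (pair_pmf unif_F unif_Fstar))
    = bind_pmf (iid_list n (pair_pmf unif_F unif_Fstar)) (\<lambda>bs.
        map_pmf (\<lambda>m. (map (\<lambda>(sB, rB). (sA + sB) / rB) bs, m))
          (SA x (sA, map (\<lambda>(sB, rB). (sA + sB) / rB) bs) (alice_output x ys)))"
proof (induction n arbitrary: ys)
  case 0
  then show ?case by (simp add: msgs_d_def SA_def alice_output_def bind_return_pmf)
next
  case (Suc n)
  then obtain y ys' where ys: "ys = y # ys'" and len: "length ys' = n" by (cases ys) auto
  define P where "P = pair_pmf (unif_F :: 'q mod_ring pmf) (unif_Fstar :: 'q mod_ring pmf)"
  define G where "G = (\<lambda>b::'q mod_ring \<times> 'q mod_ring. case b of (sB, rB) \<Rightarrow> (sA + sB) / rB)"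
  define D where "D = (\<lambda>b::'q mod_ring \<times> 'q mod_ring. case b of (sB, rB) \<Rightarrow> (sA - H x + H y + sB) / rB)"
  define S where "S = (\<lambda>bs. SA x (sA, map G bs) (alice_output x ys'))"
  define M where "M = (\<lambda>bs. msgs_d H ys' bs (sA - H x))"
  have IH: "map_pmf (\<lambda>bs. (map G bs, M bs)) (iid_list n P)
      = bind_pmf (iid_list n P) (\<lambda>bs. map_pmf (\<lambda>m. (map G bs, m)) (S bs))"
    using Suc.IH[OF len] Suc.prems(2) unfolding ys G_def M_def S_def P_def by simp
  have sg: "map_pmf (\<lambda>b. (G b, D b)) P = bind_pmf P (\<lambda>b. map_pmf (\<lambda>m. (G b, m)) (K (G b) (x = y)))"
    unfolding G_def D_def P_def by (rule single) (use Suc.prems(2) ys in auto)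
  have "map_pmf (\<lambda>bs. (map G bs, msgs_d H ys bs (sA - H x))) (iid_list (Suc n) P)
     = bind_pmf (map_pmf (\<lambda>b. (G b, D b)) P) (\<lambda>rm. map_pmf (\<lambda>(rs, ms). (fst rm # rs, snd rm # ms))
         (map_pmf (\<lambda>bs. (map G bs, M bs)) (iid_list n P)))"
    by (simp add: ys map_pmf_def bind_assoc_pmf bind_return_pmf msgs_d_def M_def D_def G_def split_beta)
  also have "\<dots> = bind_pmf (bind_pmf P (\<lambda>b. map_pmf (\<lambda>m. (G b, m)) (K (G b) (x = y))))
      (\<lambda>rm. map_pmf (\<lambda>(rs, ms). (fst rm # rs, snd rm # ms))
         (bind_pmf (iid_list n P) (\<lambda>bs. map_pmf (\<lambda>m. (map G bs, m)) (S bs))))"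
    by (simp only: sg IH)
  also have "\<dots> = bind_pmf P (\<lambda>b. bind_pmf (K (G b) (x = y)) (\<lambda>m. bind_pmf (iid_list n P) (\<lambda>bs.
       bind_pmf (S bs) (\<lambda>ms. return_pmf (G b # map G bs, m # ms)))))"
    by (simp add: map_pmf_def bind_assoc_pmf bind_return_pmf)
  also have "\<dots> = bind_pmf P (\<lambda>b. bind_pmf (iid_list n P) (\<lambda>bs. bind_pmf (K (G b) (x = y)) (\<lambda>m.
       bind_pmf (S bs) (\<lambda>ms. return_pmf (G b # map G bs, m # ms)))))"
    by (rule bind_pmf_cong[OF refl], rule bind_commute_pmf)
  also have "\<dots> = bind_pmf (iid_list (Suc n) P) (\<lambda>bs. map_pmf (\<lambda>m. (map G bs, m))
          (SA x (sA, map G bs) (alice_output x ys)))"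
    by (simp add: ys map_pmf_def bind_assoc_pmf bind_return_pmf S_def SA_def alice_output_def)
  finally show ?case unfolding P_def G_def .
qed


lemma iid_zip:
  "bind_pmf (iid_list n U) (\<lambda>xs. bind_pmf (iid_list n V) (\<lambda>ys. return_pmf (zip xs ys)))
   = iid_list n (pair_pmf U V)"
proof (induction n)
  case 0 then show ?case by (simp add: bind_return_pmf)
next
  case (Suc n)
  have "bind_pmf (iid_list (Suc n) U) (\<lambda>xs. bind_pmf (iid_list (Suc n) V) (\<lambda>ys. return_pmf (zip xs ys)))
     = bind_pmf U (\<lambda>a. bind_pmf (iid_list n U) (\<lambda>as. bind_pmf V (\<lambda>b. bind_pmf (iid_list n V)
          (\<lambda>bs. return_pmf ((a,b) # zip as bs)))))"
    by (simp add: bind_assoc_pmf bind_return_pmf)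
  also have "\<dots> = bind_pmf U (\<lambda>a. bind_pmf V (\<lambda>b. bind_pmf (iid_list n U) (\<lambda>as. bind_pmf (iid_list n V)
          (\<lambda>bs. return_pmf ((a,b) # zip as bs)))))"
    by (subst bind_commute_pmf) (rule refl)
  also have "\<dots> = iid_list (Suc n) (pair_pmf U V)"
    unfolding iid_list.simps(2) Suc.IH[symmetric]
    by (simp add: pair_pmf_def bind_assoc_pmf bind_return_pmf)
  finally show ?case .
qed


lemma ole_gen_alt:
  "ole_gen \<beta> = bind_pmf unif_F (\<lambda>sA. map_pmf (\<lambda>bs. (sA, bs)) (iid_list \<beta> (pair_pmf unif_F unif_Fstar)))"
  unfolding ole_gen_def iid_zip[symmetric]
  by (simp add: map_pmf_def bind_assoc_pmf bind_return_pmf)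

theorem theorem3:
  fixes H :: "bool list \<Rightarrow> 'q::prime_card mod_ring" and \<sigma> \<beta> :: nat
  shows "\<exists>(S_B :: bool list list \<Rightarrow> ('q mod_ring \<times> 'q mod_ring) list \<Rightarrow> 'q mod_ring pmf)
          (S_A :: bool list \<Rightarrow> 'q mod_ring \<times> 'q mod_ring list \<Rightarrow> bool list \<Rightarrow> 'q mod_ring list pmf).
     \<forall>x ys. length x = \<sigma> \<and> length ys = \<beta> \<and> (\<forall>y\<in>set ys. length y = \<sigma>)
        \<and> inj_on H (insert x (set ys)) \<longrightarrow>
       bob_view H \<beta> x ys =
         do { ole \<leftarrow> ole_gen \<beta>; m \<leftarrow> S_B ys (bob_share ole); return_pmf (ys, bob_share ole, m) }
     \<and> alice_view H \<beta> x ys =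
         do { ole \<leftarrow> ole_gen \<beta>; m \<leftarrow> S_A x (alice_share ole) (alice_output x ys);
              return_pmf (x, alice_share ole, m) }"
proof (intro exI[of _ "\<lambda>_ _. unif_F"] exI[of _ SA] allI impI conjI)
  fix x ys
  assume A: "length x = \<sigma> \<and> length ys = \<beta> \<and> (\<forall>y\<in>set ys. length y = \<sigma>) \<and> inj_on H (insert x (set ys))"
  define P where "P = pair_pmf (unif_F :: 'q mod_ring pmf) (unif_Fstar :: 'q mod_ring pmf)"
  show "bob_view H \<beta> x ys =
         do { ole \<leftarrow> ole_gen \<beta>; m \<leftarrow> unif_F; return_pmf (ys, bob_share ole, m) }" (is "_ = ?R")
  proof -
    have "bob_view H \<beta> x ys = bind_pmf unif_F (\<lambda>sA. bind_pmf (iid_list \<beta> P) (\<lambda>bs. return_pmf (ys, bs, sA - H x)))"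
      by (simp add: bob_view_def ole_gen_alt P_def map_pmf_def bind_assoc_pmf bind_return_pmf bob_share_def msg_c_def)
    also have "\<dots> = bind_pmf (iid_list \<beta> P) (\<lambda>bs. bind_pmf unif_F (\<lambda>sA. (\<lambda>m. return_pmf (ys, bs, m)) (sA + (- H x))))"
      by (subst bind_commute_pmf) simp
    also have "\<dots> = bind_pmf (iid_list \<beta> P) (\<lambda>bs. bind_pmf unif_F (\<lambda>m. return_pmf (ys, bs, m)))"
    proof -
      have h: "\<And>bs. bind_pmf unif_F (\<lambda>sA. (\<lambda>m. return_pmf (ys, bs, m)) (sA + (- H x)))
          = bind_pmf unif_F (\<lambda>m. return_pmf (ys, bs, m))"
        by (subst bind_map_pmf[symmetric]) (simp only: unif_F_shift)
      show ?thesis by (rule bind_pmf_cong[OF refl], rule h)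
    qed
    also have "\<dots> = bind_pmf unif_F (\<lambda>sA::'q mod_ring. bind_pmf (iid_list \<beta> P) (\<lambda>bs. bind_pmf unif_F (\<lambda>m. return_pmf (ys, bs, m))))"
      by simp
    also have "\<dots> = ?R"
      by (simp add: ole_gen_alt P_def map_pmf_def bind_assoc_pmf bind_return_pmf bob_share_def)
    finally show ?thesis .
  qed
  have hy: "\<forall>y\<in>set ys. H y = H x \<longleftrightarrow> x = y"
    using A by (auto simp: inj_on_def)
  show "alice_view H \<beta> x ys =
         do { ole \<leftarrow> ole_gen \<beta>; m \<leftarrow> SA x (alice_share ole) (alice_output x ys);
              return_pmf (x, alice_share ole, m) }" (is "_ = ?R")
  proof -
    have "alice_view H \<beta> x ys = bind_pmf unif_F (\<lambda>sA. map_pmf (\<lambda>(rs, m). (x, (sA, rs), m))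
       (map_pmf (\<lambda>bs. (map (\<lambda>(sB, rB). (sA + sB) / rB) bs, msgs_d H ys bs (sA - H x))) (iid_list \<beta> P)))"
      by (simp add: alice_view_def ole_gen_alt P_def map_bind_pmf pmf.map_comp o_def alice_share_def
          bob_share_def msg_c_def)
    also have "\<dots> = bind_pmf unif_F (\<lambda>sA. map_pmf (\<lambda>(rs, m). (x, (sA, rs), m))
       (bind_pmf (iid_list \<beta> P) (\<lambda>bs.
        map_pmf (\<lambda>m. (map (\<lambda>(sB, rB). (sA + sB) / rB) bs, m))
          (SA x (sA, map (\<lambda>(sB, rB). (sA + sB) / rB) bs) (alice_output x ys)))))"
      unfolding P_def using alice_core[OF _ hy] A by simp
    also have "\<dots> = ?R"
      by (simp add: ole_gen_alt P_def map_pmf_def bind_assoc_pmf bind_return_pmf alice_share_def)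
    finally show ?thesis .
  qed
qed

end
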